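(* $I(\hat R_A;\hat H_B)=I(\hat R_A;\hat R_B)$, and symmetrically $I(\hat H_A;\hat R_B)=I(\hat R_A;\hat R_B)$. That is, if one party uses the envelope of its observation, the other party loses no information by also taking the envelope of its own observation.
   Context: Fix $p>0$ and $\sigma_A^2,\sigma_B^2>0$. Let $H$ be a zero-mean circularly-symmetric complex Gaussian (ZMCSCG) variable of variance $p$, and $W_A,W_B$ ZMCSCG with variances $\sigma_A^2,\sigma_B^2$, mutually independent and independent of $H$. Define $\hat H_A=H+W_A$, $\hat H_B=H+W_B$, and envelopes $\hat R_A=|\hat H_A|$, $\hat R_B=|\hat H_B|$. Mutual information is in bits. *)

theory Defs
  imports "HOL-Probability.Probability"
begin

text \<open>Zero-mean circularly-symmetric complex Gaussian with variance v = E|X|^2: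
  density exp(-|z|^2/v)/(pi v) w.r.t. Lebesgue measure on the complex plane.\<close>
definition ZMCSCG :: "'a measure \<Rightarrow> real \<Rightarrow> ('a \<Rightarrow> complex) \<Rightarrow> bool" where
  "ZMCSCG M v X \<longleftrightarrow>
     distributed M lborel X (\<lambda>z. ennreal (exp (- (cmod z)\<^sup>2 / v) / (pi * v)))"

end

theory Submission
  imports Defs
begin


lemma lborel_complex:
  "distr (lborel \<Otimes>\<^sub>M lborel) borel (\<lambda>(x,y). Complex x y) = (lborel :: complex measure)"
proof (rule lborel_eqI[symmetric])
  fix l u :: complex
  assume lu: "\<And>b. b \<in> Basis \<Longrightarrow> l \<bullet> b \<le> u \<bullet> b"
  have "Re l \<le> Re u" "Im l \<le> Im u" using lu[of 1] lu[of \<i>] by (auto simp: inner_complex_def)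
  have pre: "(\<lambda>(x,y). Complex x y) -` box l u \<inter> space (lborel \<Otimes>\<^sub>M lborel)
     = {Re l<..<Re u} \<times> {Im l<..<Im u}"
    by (auto simp: box_def Basis_complex_def inner_complex_def space_pair_measure)
  have m: "(\<lambda>(x,y). Complex x y) \<in> measurable (lborel \<Otimes>\<^sub>M lborel) (borel :: complex measure)"
  proof -
    have "(\<lambda>(x,y). Complex x y) = (\<lambda>p. complex_of_real (fst p) + \<i> * complex_of_real (snd p))"
      by (auto simp: fun_eq_iff complex_eq_iff)
    moreover have "(\<lambda>p. complex_of_real (fst p) + \<i> * complex_of_real (snd p)) \<in> measurable (lborel \<Otimes>\<^sub>M lborel) (borel :: complex measure)"
      by measurable
    ultimately show ?thesis by simp
  qed
  show "emeasure (distr (lborel \<Otimes>\<^sub>M lborel) borel (\<lambda>(x,y). Complex x y)) (box l u) = (\<Prod>b\<in>Basis. (u - l) \<bullet> b)"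
    using \<open>Re l \<le> Re u\<close> \<open>Im l \<le> Im u\<close>
    by (simp add: emeasure_distr[OF m] pre lborel.emeasure_pair_measure_Times Basis_complex_def
         inner_complex_def ennreal_mult)
qed simp



lemma trans_slice:
  assumes "B \<in> sets (borel :: real measure)"
  shows "emeasure lborel ((\<lambda>x::real. x + c) -` B) = emeasure lborel B"
proof -
  have "emeasure lborel B = emeasure (distr lborel borel ((+) c)) B"
    by (simp add: lborel_distr_plus)
  also have "\<dots> = emeasure lborel ((+) c -` B \<inter> space lborel)"
    using assms by (subst emeasure_distr) auto
  also have "(+) c -` B \<inter> space lborel = (\<lambda>x::real. x + c) -` B" by (auto simp: add.commute)
  finally show ?thesis by simp
qed

lemma slice2_sets:
  assumes "A \<in> sets (lborel \<Otimes>\<^sub>M lborel :: (real \<times> real) measure)"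
  shows "(\<lambda>x. (x, y)) -` A \<in> sets (borel :: real measure)"
proof -
  have "(\<lambda>x. (x, y)) \<in> measurable (lborel :: real measure) (lborel \<Otimes>\<^sub>M (lborel :: real measure))" by measurable
  from measurable_sets[OF this assms] show ?thesis by simp
qed

lemma slice1_sets:
  assumes "A \<in> sets (lborel \<Otimes>\<^sub>M lborel :: (real \<times> real) measure)"
  shows "Pair x -` A \<in> sets (borel :: real measure)"
proof -
  have "Pair x \<in> measurable (lborel :: real measure) (lborel \<Otimes>\<^sub>M (lborel :: real measure))" by measurable
  from measurable_sets[OF this assms] show ?thesis by simp
qed

lemma shear1:
  "distr (lborel \<Otimes>\<^sub>M lborel) (lborel \<Otimes>\<^sub>M lborel) (\<lambda>(x,y). (x + a*y, y)) = (lborel \<Otimes>\<^sub>M lborel :: (real\<times>real) measure)"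
  (is "distr ?L ?L ?f = ?L")
proof (rule measure_eqI)
  show "sets (distr ?L ?L ?f) = sets ?L" by simp
  fix A assume A: "A \<in> sets (distr ?L ?L ?f)"
  then have A': "A \<in> sets ?L" by simp
  have fm: "?f \<in> measurable ?L ?L" by measurable
  have "emeasure (distr ?L ?L ?f) A = emeasure ?L (?f -` A \<inter> space ?L)"
    using A' fm by (simp add: emeasure_distr)
  also have "\<dots> = (\<integral>\<^sup>+y. emeasure lborel ((\<lambda>x. (x, y)) -` (?f -` A \<inter> space ?L)) \<partial>lborel)"
    using measurable_sets[OF fm A'] by (simp add: lborel_pair.emeasure_pair_measure_alt2)
  also have "\<dots> = (\<integral>\<^sup>+y. emeasure lborel ((\<lambda>x. (x, y)) -` A) \<partial>lborel)"
  proof (rule nn_integral_cong)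
    fix y
    have "(\<lambda>x. (x, y)) -` (?f -` A \<inter> space ?L) = (\<lambda>x. x + a*y) -` ((\<lambda>x. (x, y)) -` A)"
      by (auto simp: space_pair_measure)
    then show "emeasure lborel ((\<lambda>x. (x, y)) -` (?f -` A \<inter> space ?L)) = emeasure lborel ((\<lambda>x. (x, y)) -` A)"
      using trans_slice[OF slice2_sets[OF A']] by simp
  qed
  also have "\<dots> = emeasure ?L A"
    using A' by (simp add: lborel_pair.emeasure_pair_measure_alt2)
  finally show "emeasure (distr ?L ?L ?f) A = emeasure ?L A" .
qed

lemma shear2:
  "distr (lborel \<Otimes>\<^sub>M lborel) (lborel \<Otimes>\<^sub>M lborel) (\<lambda>(x,y). (x, y + b*x)) = (lborel \<Otimes>\<^sub>M lborel :: (real\<times>real) measure)"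
  (is "distr ?L ?L ?f = ?L")
proof (rule measure_eqI)
  show "sets (distr ?L ?L ?f) = sets ?L" by simp
  fix A assume A: "A \<in> sets (distr ?L ?L ?f)"
  then have A': "A \<in> sets ?L" by simp
  have fm: "?f \<in> measurable ?L ?L" by measurable
  have "emeasure (distr ?L ?L ?f) A = emeasure ?L (?f -` A \<inter> space ?L)"
    using A' fm by (simp add: emeasure_distr)
  also have "\<dots> = (\<integral>\<^sup>+x. emeasure lborel (Pair x -` (?f -` A \<inter> space ?L)) \<partial>lborel)"
    using measurable_sets[OF fm A'] by (simp add: lborel.emeasure_pair_measure_alt)
  also have "\<dots> = (\<integral>\<^sup>+x. emeasure lborel (Pair x -` A) \<partial>lborel)"
  proof (rule nn_integral_cong)
    fix x
    have "Pair x -` (?f -` A \<inter> space ?L) = (\<lambda>y. y + b*x) -` (Pair x -` A)"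
      by (auto simp: space_pair_measure)
    then show "emeasure lborel (Pair x -` (?f -` A \<inter> space ?L)) = emeasure lborel (Pair x -` A)"
      using trans_slice[OF slice1_sets[OF A']] by simp
  qed
  also have "\<dots> = emeasure ?L A"
    using A' by (simp add: lborel.emeasure_pair_measure_alt)
  finally show "emeasure (distr ?L ?L ?f) A = emeasure ?L A" .
qed

lemma negpair:
  "distr (lborel \<Otimes>\<^sub>M lborel) (lborel \<Otimes>\<^sub>M lborel) (\<lambda>(x,y). (-x, -y)) = (lborel \<Otimes>\<^sub>M lborel :: (real\<times>real) measure)"
proof -
  have "distr (lborel \<Otimes>\<^sub>M lborel) (lborel \<Otimes>\<^sub>M lborel) (\<lambda>(x,y). (-x, -y)) =
        distr (lborel \<Otimes>\<^sub>M lborel) (borel \<Otimes>\<^sub>M borel) (\<lambda>(x::real,y::real). (-x, -y))"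
    by (rule distr_cong) auto
  also have "\<dots> = distr lborel borel uminus \<Otimes>\<^sub>M distr lborel borel uminus"
    by (rule pair_measure_distr[symmetric]) (auto simp: lborel_distr_uminus intro: lborel.sigma_finite_measure_axioms)
  also have "\<dots> = lborel \<Otimes>\<^sub>M lborel" by (simp add: lborel_distr_uminus)
  finally show ?thesis .
qed



lemma rotpair:
  assumes cs: "c^2 + s^2 = (1::real)"
  shows "distr (lborel \<Otimes>\<^sub>M lborel) (lborel \<Otimes>\<^sub>M lborel) (\<lambda>(x,y). (c*x - s*y, s*x + c*y)) = (lborel \<Otimes>\<^sub>M lborel :: (real\<times>real) measure)"
proof (cases "c = -1")
  case True
  then have "s = 0" using cs by (simp add: power2_eq_square)
  then have "(\<lambda>(x,y). (c*x - s*y, s*x + c*y)) = (\<lambda>(x::real,y::real). (-x, -y))"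
    using True by auto
  then show ?thesis using negpair by simp
next
  case False
  define t where "t = s / (1 + c)"
  have c1: "1 + c \<noteq> 0" using False by linarith
  let ?L = "lborel \<Otimes>\<^sub>M lborel :: (real\<times>real) measure"
  let ?f1 = "\<lambda>(x::real,y::real). (x + (-t)*y, y)"
  let ?f2 = "\<lambda>(x::real,y::real). (x, y + s*x)"
  have eq: "(\<lambda>(x,y). (c*x - s*y, s*x + c*y)) = ?f1 \<circ> (?f2 \<circ> ?f1)"
  proof -
    have ss: "s * s = (1 - c) * (1 + c)" using cs by (simp add: power2_eq_square algebra_simps)
    have ts': "t * s = 1 - c" using ss c1 unfolding t_def by (simp add: field_simps)
    have ts: "1 - t * s = c" using ts' by simp
    have tc: "t * (1 + c) = s" using c1 unfolding t_def by simp
    show ?thesis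
    proof (rule ext, clarify)
      fix x y :: real
      have e1: "x + - t * y + - t * (y + s * (x + - t * y)) = c*x - s*y"
      proof -
        have "x + - t * y + - t * (y + s * (x + - t * y)) = (1 - t * s) * x - t * (1 + (1 - t * s)) * y"
          by (simp add: algebra_simps)
        also have "\<dots> = c*x - t * (1 + c) * y" by (simp only: ts)
        also have "\<dots> = c*x - s*y" by (simp only: tc)
        finally show ?thesis .
      qed
      have e2: "y + s * (x + - t * y) = s*x + c*y"
      proof -
        have "y + s * (x + - t * y) = s * x + (1 - t * s) * y" by (simp add: algebra_simps)
        also have "\<dots> = s*x + c*y" by (simp only: ts)
        finally show ?thesis .
      qed
      show "(c*x - s*y, s*x + c*y) = (?f1 \<circ> (?f2 \<circ> ?f1)) (x, y)"
        using e1 e2 by simp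
    qed
  qed
  have m1: "?f1 \<in> measurable ?L ?L" by measurable
  have m2: "?f2 \<in> measurable ?L ?L" by measurable
  have d1: "distr ?L ?L ?f1 = ?L" by (rule shear1)
  have d2: "distr ?L ?L ?f2 = ?L" by (rule shear2)
  have d21: "distr ?L ?L (?f2 \<circ> ?f1) = ?L"
    using distr_distr[OF m2 m1] d1 d2 by simp
  have "distr ?L ?L (?f1 \<circ> (?f2 \<circ> ?f1)) = ?L"
    using distr_distr[OF m1 measurable_comp[OF m1 m2]] d21 d1 by simp
  then show ?thesis using eq by simp
qed



lemma Complex_pair_measurable:
  "(\<lambda>(x,y). Complex x y) \<in> measurable (lborel \<Otimes>\<^sub>M lborel) (borel :: complex measure)"
proof -
  have "(\<lambda>(x,y). Complex x y) = (\<lambda>p. complex_of_real (fst p) + \<i> * complex_of_real (snd p))"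
    by (auto simp: fun_eq_iff complex_eq_iff)
  moreover have "(\<lambda>p. complex_of_real (fst p) + \<i> * complex_of_real (snd p)) \<in> measurable (lborel \<Otimes>\<^sub>M lborel) (borel :: complex measure)"
    by measurable
  ultimately show ?thesis by simp
qed

lemma lborel_rot:
  fixes u :: complex assumes u: "cmod u = 1"
  shows "distr lborel borel (\<lambda>z. u * z) = lborel"
proof -
  let ?L = "lborel \<Otimes>\<^sub>M lborel :: (real\<times>real) measure"
  let ?phi = "\<lambda>(x,y). Complex x y"
  define c where "c = Re u"
  define s where "s = Im u"
  have cs: "c^2 + s^2 = 1" using u unfolding c_def s_def cmod_def by simp
  let ?R = "\<lambda>(x::real,y::real). (c*x - s*y, s*x + c*y)"
  have mR: "?R \<in> measurable ?L ?L" by measurable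
  have mu: "(\<lambda>z. u * z) \<in> measurable (borel :: complex measure) borel" by measurable
  have eq: "(\<lambda>z. u * z) \<circ> ?phi = ?phi \<circ> ?R"
    by (auto simp: fun_eq_iff complex_eq_iff c_def s_def algebra_simps)
  have "distr lborel borel (\<lambda>z. u * z) = distr (distr ?L borel ?phi) borel (\<lambda>z. u * z)"
    by (simp add: lborel_complex)
  also have "\<dots> = distr ?L borel ((\<lambda>z. u * z) \<circ> ?phi)"
    by (rule distr_distr[OF mu Complex_pair_measurable])
  also have "\<dots> = distr ?L borel (?phi \<circ> ?R)" by (simp only: eq)
  also have "\<dots> = distr (distr ?L ?L ?R) borel ?phi"
    by (rule distr_distr[symmetric, OF Complex_pair_measurable mR])
  also have "distr ?L ?L ?R = ?L" by (rule rotpair[OF cs])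
  also have "distr ?L borel ?phi = lborel" by (rule lborel_complex)
  finally show ?thesis .
qed

lemma density_rot:
  fixes u :: complex and g :: "complex \<Rightarrow> ennreal"
  assumes u: "cmod u = 1" and g: "\<And>z. g (u * z) = g z" and gm: "g \<in> borel_measurable borel"
  shows "distr (density lborel g) borel (\<lambda>z. u * z) = density lborel g"
proof -
  have mu: "(\<lambda>z. u * z) \<in> measurable (lborel :: complex measure) borel" by measurable
  have "density (distr lborel borel (\<lambda>z. u * z)) g = distr (density lborel (\<lambda>x. g (u * x))) borel (\<lambda>z. u * z)"
    by (rule density_distr) (use gm mu in auto)
  moreover have "(\<lambda>x. g (u * x)) = g" using g by (simp add: fun_eq_iff)
  ultimately have "density (distr lborel borel (\<lambda>z. u * z)) g = distr (density lborel g) borel (\<lambda>z. u * z)"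
    by simp
  then show ?thesis by (simp only: lborel_rot[OF u])
qed

definition gdens :: "real \<Rightarrow> complex \<Rightarrow> ennreal" where
  "gdens v = (\<lambda>z. ennreal (exp (- (cmod z)\<^sup>2 / v) / (pi * v)))"

lemma ZMCSCG_law:
  assumes "ZMCSCG M v X"
  shows "distr M borel X = density lborel (gdens v)" "X \<in> measurable M borel"
proof -
  from assms have d: "distr M lborel X = density lborel (gdens v)" and X: "X \<in> measurable M lborel"
    unfolding ZMCSCG_def distributed_def gdens_def by auto
  have "distr M borel X = distr M lborel X" by (rule distr_cong) auto
  then show "distr M borel X = density lborel (gdens v)" using d by simp
  show "X \<in> measurable M borel" using X by simp
qed

lemma ZMCSCG_rot:
  assumes "ZMCSCG M v X" and u: "cmod u = 1"
  shows "distr M borel (\<lambda>\<omega>. u * X \<omega>) = distr M borel X"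
proof -
  note L = ZMCSCG_law[OF assms(1)]
  have mu: "(\<lambda>z. u * z) \<in> measurable (borel :: complex measure) borel" by measurable
  have "distr M borel (\<lambda>\<omega>. u * X \<omega>) = distr (distr M borel X) borel (\<lambda>z. u * z)"
    using distr_distr[OF mu L(2)] by (simp add: comp_def)
  also have "\<dots> = density lborel (gdens v)"
    unfolding L(1) by (rule density_rot[OF u]) (auto simp: gdens_def norm_mult u)
  finally show ?thesis using L(1) by simp
qed

lemma ZMCSCG_zero:
  assumes "ZMCSCG M v X"
  shows "emeasure (distr M borel X) {0} = 0"
proof -
  note L = ZMCSCG_law[OF assms(1)]
  have m: "gdens v \<in> borel_measurable lborel" unfolding gdens_def by simp
  have n0: "{0::complex} \<in> null_sets lborel"
    by (auto simp: null_sets_def emeasure_lborel_countable)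
  have ae: "AE x in lborel. x \<noteq> (0::complex)"
    by (rule AE_I'[OF n0]) auto
  have "{0} \<in> null_sets (density lborel (gdens v))"
  proof -
    have "AE x in lborel. x \<in> {0} \<longrightarrow> gdens v x = 0"
      by (rule AE_mp[OF ae]) auto
    then show ?thesis using null_sets_density_iff[OF m, of "{0}"] by simp
  qed
  then have "emeasure (density lborel (gdens v)) {0} = 0" by auto
  then show ?thesis using L by simp
qed



locale zsetup =
  fixes M :: "'a measure" and H WA WB :: "'a \<Rightarrow> complex" and p sa sb :: real
  assumes PS: "prob_space M"
    and ZH: "ZMCSCG M p H" and ZA: "ZMCSCG M sa WA" and ZB: "ZMCSCG M sb WB"
    and IND: "prob_space.indep_vars M (\<lambda>_. borel)
           (\<lambda>i::nat. if i = 0 then H else if i = 1 then WA else WB) {0, 1, 2}"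
begin

definition "X = (\<lambda>i::nat. if i = 0 then H else if i = 1 then WA else WB)"
definition "I = {0, 1, 2::nat}"
definition "D = (\<lambda>i. distr M borel (X i))"

lemma X_Z: "\<exists>v. ZMCSCG M v (X i)"
  using ZH ZA ZB unfolding X_def by auto

lemma X_meas[measurable]: "X i \<in> borel_measurable M"
  using X_Z ZMCSCG_law(2) by blast

lemma H_meas[measurable]: "H \<in> borel_measurable M" and WA_meas[measurable]: "WA \<in> borel_measurable M"
  and WB_meas[measurable]: "WB \<in> borel_measurable M"
  using ZMCSCG_law(2)[OF ZH] ZMCSCG_law(2)[OF ZA] ZMCSCG_law(2)[OF ZB] by auto

lemma D_prob: "prob_space (D i)"
  unfolding D_def by (rule prob_space.prob_space_distr[OF PS]) simp

lemma sets_D[simp]: "sets (D i) = sets borel"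
  by (simp add: D_def)

lemma D_rot: "cmod u = 1 \<Longrightarrow> distr (D i) borel (\<lambda>z. u * z) = D i"
proof -
  assume u: "cmod u = 1"
  obtain v where v: "ZMCSCG M v (X i)" using X_Z by blast
  have mu: "(\<lambda>z. u * z) \<in> measurable (borel :: complex measure) borel" by measurable
  have "distr (D i) borel (\<lambda>z. u * z) = distr M borel (\<lambda>\<omega>. u * X i \<omega>)"
    unfolding D_def using distr_distr[OF mu X_meas[of i]] by (simp add: comp_def)
  also have "\<dots> = D i" unfolding D_def by (rule ZMCSCG_rot[OF v u])
  finally show ?thesis .
qed

lemma joint: "distr M (PiM I (\<lambda>_. borel)) (\<lambda>\<omega>. \<lambda>i\<in>I. X i \<omega>) = PiM I D"
proof -
  have "prob_space.indep_vars M (\<lambda>_. borel) X I" using IND unfolding X_def I_def .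
  then show ?thesis
    unfolding D_def
    using prob_space.indep_vars_iff_distr_eq_PiM[OF PS, where I=I and X=X and M'="\<lambda>_. borel"]
    by (simp add: I_def)
qed

lemma Pi_rot:
  assumes u: "cmod u = 1"
  shows "distr (PiM I D) (PiM I D) (\<lambda>x. \<lambda>i\<in>I. u * x i) = PiM I D"
proof -
  have pp: "product_prob_space D" by (rule product_prob_spaceI) (rule D_prob)
  have mu: "\<And>i. i \<in> I \<Longrightarrow> (\<lambda>z. u * z) \<in> measurable (D i) (D i)"
    by (simp add: measurable_cong_sets[OF sets_D sets_D])
  have "distr (PiM I D) (PiM I D) (compose I (\<lambda>z. u * z)) = PiM I (\<lambda>i. distr (D i) (D i) (\<lambda>z. u * z))"
    by (rule distr_PiM_finite_prob_space[OF _ pp pp mu]) (auto simp: I_def)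
  also have "(\<lambda>i. distr (D i) (D i) (\<lambda>z. u * z)) = D"
  proof
    fix i
    have "distr (D i) (D i) (\<lambda>z. u * z) = distr (D i) borel (\<lambda>z. u * z)"
      by (rule distr_cong) auto
    then show "distr (D i) (D i) (\<lambda>z. u * z) = D i" using D_rot[OF u] by simp
  qed
  finally show ?thesis by (simp add: compose_def restrict_def)
qed

lemma sets_PiD: "sets (PiM I D) = sets (PiM I (\<lambda>_. borel :: complex measure))"
  by (rule sets_PiM_cong) auto

lemma law_via_Pi:
  assumes F: "F \<in> measurable (PiM I (\<lambda>_. borel)) N"
  shows "distr M N (\<lambda>\<omega>. F (\<lambda>i\<in>I. X i \<omega>)) = distr (PiM I D) N F"
proof -
  have mX: "(\<lambda>\<omega>. \<lambda>i\<in>I. X i \<omega>) \<in> measurable M (PiM I (\<lambda>_. borel))" by measurable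
  have "distr (PiM I D) N F = distr (distr M (PiM I (\<lambda>_. borel)) (\<lambda>\<omega>. \<lambda>i\<in>I. X i \<omega>)) N F"
    by (simp add: joint)
  also have "\<dots> = distr M N (F \<circ> (\<lambda>\<omega>. \<lambda>i\<in>I. X i \<omega>))"
    by (rule distr_distr[OF F mX])
  finally show ?thesis by (simp add: comp_def)
qed

lemma law_rot:
  assumes F: "F \<in> measurable (PiM I (\<lambda>_. borel)) N" and R: "R \<in> measurable N N"
    and u: "cmod u = 1"
    and comm: "\<And>x. R (F x) = F (\<lambda>i\<in>I. u * x i)"
  shows "distr (distr M N (\<lambda>\<omega>. F (\<lambda>i\<in>I. X i \<omega>))) N R = distr M N (\<lambda>\<omega>. F (\<lambda>i\<in>I. X i \<omega>))"
proof -
  have F': "F \<in> measurable (PiM I D) N" using F by (simp add: measurable_cong_sets[OF sets_PiD refl])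
  have mr: "(\<lambda>x. \<lambda>i\<in>I. u * x i) \<in> measurable (PiM I D) (PiM I D)"
    by (simp add: measurable_cong_sets[OF sets_PiD sets_PiD])
  have "distr (distr (PiM I D) N F) N R = distr (PiM I D) N (R \<circ> F)"
    by (rule distr_distr[OF R F'])
  also have "R \<circ> F = F \<circ> (\<lambda>x. \<lambda>i\<in>I. u * x i)" using comm by (simp add: fun_eq_iff)
  also have "distr (PiM I D) N (F \<circ> (\<lambda>x. \<lambda>i\<in>I. u * x i)) = distr (distr (PiM I D) (PiM I D) (\<lambda>x. \<lambda>i\<in>I. u * x i)) N F"
    by (rule distr_distr[symmetric, OF F' mr])
  also have "\<dots> = distr (PiM I D) N F" by (simp only: Pi_rot[OF u])
  finally show ?thesis using law_via_Pi[OF F] by simp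
qed

end


lemma KL_suff:
  fixes Q P :: "'x measure" and Q' P' :: "'y measure" and G :: "'z measure"
  assumes sQ: "sets P = sets Q" and sQ': "sets P' = sets Q'"
   and fQ': "finite_measure Q'" and fQ: "finite_measure Q" and pG: "prob_space G"
   and T: "T \<in> measurable Q Q'" and S: "S \<in> measurable (Q' \<Otimes>\<^sub>M G) Q"
   and P_eq: "P = distr (P' \<Otimes>\<^sub>M G) Q S" and Q_eq: "Q = distr (Q' \<Otimes>\<^sub>M G) Q S"
   and P'_eq: "P' = distr P Q' T"
   and Q'_eq: "Q' = distr Q Q' T"
   and TS: "AE x in Q' \<Otimes>\<^sub>M G. T (S x) = fst x"
  shows "KL_divergence b Q P = KL_divergence b Q' P'"
proof -
  interpret Q': finite_measure Q' by fact
  interpret Q: finite_measure Q by fact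
  interpret G: prob_space G by fact
  have TP: "T \<in> measurable P Q'" using T by (simp add: measurable_cong_sets[OF sQ refl])
  have key: "AE x in P. RN_deriv Q P x = RN_deriv Q' P' (T x)"
  proof (cases "\<exists>f. f \<in> borel_measurable Q' \<and> density Q' f = P'")
    case True
    then obtain f where fm: "f \<in> borel_measurable Q'" and fd: "density Q' f = P'" by blast
    have fTm: "(\<lambda>x. f (T x)) \<in> borel_measurable Q" using fm T by measurable
    have "density Q (\<lambda>x. f (T x)) = density (distr (Q' \<Otimes>\<^sub>M G) Q S) (\<lambda>x. f (T x))"
      using Q_eq by (rule arg_cong[where f="\<lambda>N. density N (\<lambda>x. f (T x))"])
    also have "\<dots> = distr (density (Q' \<Otimes>\<^sub>M G) (\<lambda>x. f (T (S x)))) Q S"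
      by (rule density_distr[OF fTm S])
    also have "density (Q' \<Otimes>\<^sub>M G) (\<lambda>x. f (T (S x))) = density (Q' \<Otimes>\<^sub>M G) (\<lambda>(x,y). f x * 1)"
    proof (rule density_cong)
      show "(\<lambda>x. f (T (S x))) \<in> borel_measurable (Q' \<Otimes>\<^sub>M G)" using fTm S by measurable
      show "(\<lambda>(x,y). f x * 1) \<in> borel_measurable (Q' \<Otimes>\<^sub>M G)" using fm by measurable
      show "AE x in Q' \<Otimes>\<^sub>M G. f (T (S x)) = (\<lambda>(x,y). f x * 1) x"
        using TS by (rule AE_mp) auto
    qed
    also have "\<dots> = density Q' f \<Otimes>\<^sub>M density G (\<lambda>_. 1)"
      by (rule pair_measure_density[symmetric]) (use fm in \<open>auto simp: density_1 intro: G.sigma_finite_measure_axioms\<close>)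
    also have "\<dots> = P' \<Otimes>\<^sub>M G" by (simp add: fd density_1)
    finally have dens: "density Q (\<lambda>x. f (T x)) = P" using P_eq by simp
    have ae1: "AE x in Q. f (T x) = RN_deriv Q P x"
      by (rule Q.RN_deriv_unique[OF fTm dens])
    have ae1': "AE x in P. f (T x) = RN_deriv Q P x"
      using ae1 unfolding dens[symmetric] by (subst AE_density[OF fTm]) (auto elim: AE_mp)
    have ae2: "AE y in Q'. f y = RN_deriv Q' P' y"
      by (rule Q'.RN_deriv_unique[OF fm fd])
    have ae2': "AE y in P'. f y = RN_deriv Q' P' y"
      using ae2 unfolding fd[symmetric] by (subst AE_density[OF fm]) (auto elim: AE_mp)
    have "AE x in distr P Q' T. f x = RN_deriv Q' P' x" unfolding P'_eq[symmetric] by (rule ae2')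
    then have ae2'': "AE x in P. f (T x) = RN_deriv Q' P' (T x)"
      by (subst (asm) AE_distr_iff[OF TP]) (use fm in \<open>auto simp: sQ'\<close>)
    show ?thesis using ae1' ae2'' by (auto elim: AE_mp)
  next
    case False
    then have r0: "RN_deriv Q' P' = (\<lambda>_. 0)" unfolding RN_deriv_def by auto
    have "\<not> (\<exists>g. g \<in> borel_measurable Q \<and> density Q g = P)"
    proof
      assume "\<exists>g. g \<in> borel_measurable Q \<and> density Q g = P"
      then obtain g where gm: "g \<in> borel_measurable Q" and gd: "density Q g = P" by blast
      have acP: "absolutely_continuous Q P" using absolutely_continuousI_density[OF gm] gd by simp
      have "absolutely_continuous Q' P'"
        unfolding absolutely_continuous_def
      proof
        fix A assume A: "A \<in> null_sets Q'"
        then have "A \<in> null_sets (distr Q Q' T)" using Q'_eq by simp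
        then have n1: "T -` A \<inter> space Q \<in> null_sets Q" and As: "A \<in> sets Q'"
          using null_sets_distr_iff[OF T] by auto
        have "T -` A \<inter> space Q \<in> null_sets P" using acP n1 unfolding absolutely_continuous_def by auto
        then have "T -` A \<inter> space P \<in> null_sets P" using sets_eq_imp_space_eq[OF sQ] by simp
        then have "A \<in> null_sets (distr P Q' T)" using null_sets_distr_iff[OF TP] As by auto
        then show "A \<in> null_sets P'" using P'_eq by simp
      qed
      then obtain f where "f \<in> borel_measurable Q'" "density Q' f = P'"
        using Q'.Radon_Nikodym[of P'] sQ' by auto
      then show False using False by blast
    qed
    then have "RN_deriv Q P = (\<lambda>_. 0)" unfolding RN_deriv_def by auto
    then show ?thesis using r0 by simp
  qed
  have "KL_divergence b Q P = (\<integral>x. log b (enn2real (RN_deriv Q P x)) \<partial>P)"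
    by (simp add: KL_divergence_def entropy_density_def comp_def)
  also have "\<dots> = (\<integral>x. log b (enn2real (RN_deriv Q' P' (T x))) \<partial>P)"
  proof (rule integral_cong_AE)
    show "(\<lambda>x. log b (enn2real (RN_deriv Q P x))) \<in> borel_measurable P"
      by (simp add: measurable_cong_sets[OF sQ refl])
    show "(\<lambda>x. log b (enn2real (RN_deriv Q' P' (T x)))) \<in> borel_measurable P"
      using TP by measurable
    show "AE x in P. log b (enn2real (RN_deriv Q P x)) = log b (enn2real (RN_deriv Q' P' (T x)))"
      using key by (rule AE_mp) auto
  qed
  also have "\<dots> = (\<integral>y. log b (enn2real (RN_deriv Q' P' y)) \<partial>distr P Q' T)"
    by (rule integral_distr[symmetric, OF TP]) simp
  also have "\<dots> = KL_divergence b Q' P'"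
    using P'_eq by (simp add: KL_divergence_def entropy_density_def comp_def)
  finally show ?thesis .
qed



lemma rot_point:
  fixes G :: "complex measure" and MA :: "'b measure"
  assumes sG: "sets G = sets borel" and a: "a \<in> space MA"
   and rotG: "\<And>u. cmod u = 1 \<Longrightarrow> distr G borel (\<lambda>z. u*z) = G"
  shows "distr G (MA \<Otimes>\<^sub>M borel) (\<lambda>z. (a, complex_of_real (cmod h) * z)) = distr G (MA \<Otimes>\<^sub>M borel) (\<lambda>z. (a, h * z))"
proof (cases "h = 0")
  case True then show ?thesis by simp
next
  case False
  define w where "w = h / complex_of_real (cmod h)"
  have w: "cmod w = 1" using False unfolding w_def by (simp add: norm_divide)
  have hw: "complex_of_real (cmod h) * (w * z) = h * z" for z
    using False unfolding w_def by simp
  have mG: "measurable G = measurable borel" by (rule measurable_cong_sets[OF sG refl, THEN ext]) 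
  have m1: "(\<lambda>z. (a, complex_of_real (cmod h) * z)) \<in> measurable (borel :: complex measure) (MA \<Otimes>\<^sub>M borel)"
    using a by measurable
  have m2: "(\<lambda>z. w * z) \<in> measurable G (borel :: complex measure)"
    unfolding mG by measurable
  have "distr G (MA \<Otimes>\<^sub>M borel) (\<lambda>z. (a, h * z)) = distr G (MA \<Otimes>\<^sub>M borel) ((\<lambda>z. (a, complex_of_real (cmod h) * z)) \<circ> (\<lambda>z. w * z))"
    by (simp add: comp_def hw)
  also have "\<dots> = distr (distr G borel (\<lambda>z. w * z)) (MA \<Otimes>\<^sub>M borel) (\<lambda>z. (a, complex_of_real (cmod h) * z))"
    by (rule distr_distr[symmetric, OF m1 m2])
  also have "\<dots> = distr G (MA \<Otimes>\<^sub>M borel) (\<lambda>z. (a, complex_of_real (cmod h) * z))"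
    by (simp only: rotG[OF w])
  finally show ?thesis by simp
qed

lemma rot_repr:
  fixes N :: "('b \<times> complex) measure" and G :: "complex measure" and MA :: "'b measure"
  assumes sN: "sets N = sets (MA \<Otimes>\<^sub>M borel)" and pN: "prob_space N"
   and pG: "prob_space G" and sG: "sets G = sets borel"
   and rotN: "\<And>u. cmod u = 1 \<Longrightarrow> distr N (MA \<Otimes>\<^sub>M borel) (\<lambda>(a,h). (a, u*h)) = N"
   and rotG: "\<And>u. cmod u = 1 \<Longrightarrow> distr G borel (\<lambda>z. u*z) = G"
   and aeG: "AE z in G. cmod z = 1"
  shows "distr (distr N (MA \<Otimes>\<^sub>M borel) (\<lambda>(a,h). (a, cmod h)) \<Otimes>\<^sub>M G) (MA \<Otimes>\<^sub>M borel)
           (\<lambda>((a,r),z). (a, complex_of_real r * z)) = N"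
    (is "distr (?Nt \<Otimes>\<^sub>M G) ?C ?S = N")
proof -
  interpret N: prob_space N by fact
  interpret G: prob_space G by fact
  interpret NG: pair_sigma_finite N G ..
  let ?T = "\<lambda>(a::'b,h::complex). (a, cmod h)"
  let ?R = "\<lambda>((a::'b,h::complex),z::complex). (a, h * z)"
  have spG: "space G = UNIV" using sets_eq_imp_space_eq[OF sG] by simp
  have spN: "space N = space MA \<times> UNIV" using sets_eq_imp_space_eq[OF sN] by (simp add: space_pair_measure)
  have mG: "measurable G = measurable borel" by (rule measurable_cong_sets[OF sG refl, THEN ext])
  have mN: "measurable N = measurable (MA \<Otimes>\<^sub>M borel)" by (rule measurable_cong_sets[OF sN refl, THEN ext])
  have mT: "?T \<in> measurable N (MA \<Otimes>\<^sub>M borel)" unfolding mN by measurable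
  interpret Nt: prob_space ?Nt by (rule N.prob_space_distr[OF mT])
  have sNtG: "sets (?Nt \<Otimes>\<^sub>M G) = sets ((MA \<Otimes>\<^sub>M borel) \<Otimes>\<^sub>M borel)"
    by (rule sets_pair_measure_cong) (auto simp: sG)
  have sNG: "sets (N \<Otimes>\<^sub>M G) = sets ((MA \<Otimes>\<^sub>M borel) \<Otimes>\<^sub>M borel)"
    by (rule sets_pair_measure_cong) (auto simp: sG sN)
  have Seq: "?S = (\<lambda>x. (fst (fst x), complex_of_real (snd (fst x)) * snd x))" by (auto simp: fun_eq_iff)
  have Req: "?R = (\<lambda>x. (fst (fst x), snd (fst x) * snd x))" by (auto simp: fun_eq_iff)
  have mS: "?S \<in> measurable (?Nt \<Otimes>\<^sub>M G) ?C"
    unfolding measurable_cong_sets[OF sNtG refl] Seq by measurable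
  have mR: "?R \<in> measurable (N \<Otimes>\<^sub>M G) ?C"
    unfolding measurable_cong_sets[OF sNG refl] Req by measurable
  show ?thesis
  proof (rule measure_eqI)
    show "sets (distr (?Nt \<Otimes>\<^sub>M G) ?C ?S) = sets N" using sN by simp
    fix A assume "A \<in> sets (distr (?Nt \<Otimes>\<^sub>M G) ?C ?S)"
    then have A: "A \<in> sets ?C" by simp
    define SA where "SA = ?S -` A \<inter> space (?Nt \<Otimes>\<^sub>M G)"
    define RA where "RA = ?R -` A \<inter> space (N \<Otimes>\<^sub>M G)"
    have SA: "SA \<in> sets (?Nt \<Otimes>\<^sub>M G)" unfolding SA_def using mS A by (rule measurable_sets)
    have RA: "RA \<in> sets (N \<Otimes>\<^sub>M G)" unfolding RA_def using mR A by (rule measurable_sets)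
    have "emeasure (distr (?Nt \<Otimes>\<^sub>M G) ?C ?S) A = emeasure (?Nt \<Otimes>\<^sub>M G) SA"
      unfolding SA_def by (rule emeasure_distr[OF mS A])
    also have "\<dots> = (\<integral>\<^sup>+y. emeasure G (Pair y -` SA) \<partial>?Nt)"
      by (rule G.emeasure_pair_measure_alt[OF SA])
    also have "\<dots> = (\<integral>\<^sup>+x. emeasure G (Pair (?T x) -` SA) \<partial>N)"
      by (rule nn_integral_distr[OF mT]) (use G.measurable_emeasure_Pair[OF SA] in simp)
    also have "\<dots> = (\<integral>\<^sup>+x. emeasure G (Pair x -` RA) \<partial>N)"
    proof (rule nn_integral_cong)
      fix x assume x: "x \<in> space N"
      obtain a h where xah: "x = (a, h)" by (cases x)
      have a: "a \<in> space MA" using x spN xah by auto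
      have m1: "(\<lambda>z. (a, complex_of_real (cmod h) * z)) \<in> measurable G ?C"
        unfolding mG using a by measurable
      have m2: "(\<lambda>z. (a, h * z)) \<in> measurable G ?C"
        unfolding mG using a by measurable
      have e1: "Pair (?T x) -` SA = (\<lambda>z. (a, complex_of_real (cmod h) * z)) -` A \<inter> space G"
        unfolding SA_def using a by (auto simp: xah space_pair_measure spG)
      have e2: "Pair x -` RA = (\<lambda>z. (a, h * z)) -` A \<inter> space G"
        unfolding RA_def using a by (auto simp: xah space_pair_measure spG spN)
      have "emeasure G (Pair (?T x) -` SA) = emeasure (distr G ?C (\<lambda>z. (a, complex_of_real (cmod h) * z))) A"
        unfolding e1 by (rule emeasure_distr[symmetric, OF m1 A])
      also have "\<dots> = emeasure (distr G ?C (\<lambda>z. (a, h * z))) A"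
        by (simp only: rot_point[OF sG a rotG])
      also have "\<dots> = emeasure G (Pair x -` RA)"
        unfolding e2 by (rule emeasure_distr[OF m2 A])
      finally show "emeasure G (Pair (?T x) -` SA) = emeasure G (Pair x -` RA)" .
    qed
    also have "\<dots> = emeasure (N \<Otimes>\<^sub>M G) RA"
      by (rule G.emeasure_pair_measure_alt[OF RA, symmetric])
    also have "\<dots> = (\<integral>\<^sup>+z. emeasure N ((\<lambda>x. (x, z)) -` RA) \<partial>G)"
      by (rule NG.emeasure_pair_measure_alt2[OF RA])
    also have "\<dots> = (\<integral>\<^sup>+z. emeasure N A \<partial>G)"
    proof (rule nn_integral_cong_AE)
      show "AE z in G. emeasure N ((\<lambda>x. (x, z)) -` RA) = emeasure N A"
      proof (rule AE_mp[OF aeG], intro AE_I2 impI)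
        fix z :: complex assume z: "cmod z = 1"
        have mz: "(\<lambda>(a,h). (a, z*h)) \<in> measurable N ?C" unfolding mN by measurable
        have e: "(\<lambda>x. (x, z)) -` RA = (\<lambda>(a,h). (a, z*h)) -` A \<inter> space N"
          unfolding RA_def by (auto simp: space_pair_measure spG mult.commute)
        have "emeasure N ((\<lambda>x. (x, z)) -` RA) = emeasure (distr N ?C (\<lambda>(a,h). (a, z*h))) A"
          unfolding e by (rule emeasure_distr[symmetric, OF mz A])
        also have "\<dots> = emeasure N A" by (simp only: rotN[OF z])
        finally show "emeasure N ((\<lambda>x. (x, z)) -` RA) = emeasure N A" .
      qed
    qed
    also have "\<dots> = emeasure N A" by (simp add: G.emeasure_space_1)
    finally show "emeasure (distr (?Nt \<Otimes>\<^sub>M G) ?C ?S) A = emeasure N A" .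
  qed
qed

lemma rot_point1:
  fixes G :: "complex measure" and MA :: "'b measure"
  assumes sG: "sets G = sets borel" and a: "a \<in> space MA"
   and rotG: "\<And>u. cmod u = 1 \<Longrightarrow> distr G borel (\<lambda>z. u*z) = G"
  shows "distr G (borel \<Otimes>\<^sub>M MA) (\<lambda>z. (complex_of_real (cmod h) * z, a)) = distr G (borel \<Otimes>\<^sub>M MA) (\<lambda>z. (h * z, a))"
proof (cases "h = 0")
  case True then show ?thesis by simp
next
  case False
  define w where "w = h / complex_of_real (cmod h)"
  have w: "cmod w = 1" using False unfolding w_def by (simp add: norm_divide)
  have hw: "complex_of_real (cmod h) * (w * z) = h * z" for z
    using False unfolding w_def by simp
  have mG: "measurable G = measurable borel" by (rule measurable_cong_sets[OF sG refl, THEN ext]) 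
  have m1: "(\<lambda>z. (complex_of_real (cmod h) * z, a)) \<in> measurable (borel :: complex measure) (borel \<Otimes>\<^sub>M MA)"
    using a by measurable
  have m2: "(\<lambda>z. w * z) \<in> measurable G (borel :: complex measure)"
    unfolding mG by measurable
  have "distr G (borel \<Otimes>\<^sub>M MA) (\<lambda>z. (h * z, a)) = distr G (borel \<Otimes>\<^sub>M MA) ((\<lambda>z. (complex_of_real (cmod h) * z, a)) \<circ> (\<lambda>z. w * z))"
    by (simp add: comp_def hw)
  also have "\<dots> = distr (distr G borel (\<lambda>z. w * z)) (borel \<Otimes>\<^sub>M MA) (\<lambda>z. (complex_of_real (cmod h) * z, a))"
    by (rule distr_distr[symmetric, OF m1 m2])
  also have "\<dots> = distr G (borel \<Otimes>\<^sub>M MA) (\<lambda>z. (complex_of_real (cmod h) * z, a))"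
    by (simp only: rotG[OF w])
  finally show ?thesis by simp
qed

lemma rot_repr1:
  fixes N :: "(complex \<times> 'b) measure" and G :: "complex measure" and MA :: "'b measure"
  assumes sN: "sets N = sets (borel \<Otimes>\<^sub>M MA)" and pN: "prob_space N"
   and pG: "prob_space G" and sG: "sets G = sets borel"
   and rotN: "\<And>u. cmod u = 1 \<Longrightarrow> distr N (borel \<Otimes>\<^sub>M MA) (\<lambda>(h,a). (u*h, a)) = N"
   and rotG: "\<And>u. cmod u = 1 \<Longrightarrow> distr G borel (\<lambda>z. u*z) = G"
   and aeG: "AE z in G. cmod z = 1"
  shows "distr (distr N (borel \<Otimes>\<^sub>M MA) (\<lambda>(h,a). (cmod h, a)) \<Otimes>\<^sub>M G) (borel \<Otimes>\<^sub>M MA)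
           (\<lambda>((r,a),z). (complex_of_real r * z, a)) = N"
    (is "distr (?Nt \<Otimes>\<^sub>M G) ?C ?S = N")
proof -
  interpret N: prob_space N by fact
  interpret G: prob_space G by fact
  interpret NG: pair_sigma_finite N G ..
  let ?T = "\<lambda>(h::complex,a::'b). (cmod h, a)"
  let ?R = "\<lambda>((h::complex,a::'b),z::complex). (h * z, a)"
  have spG: "space G = UNIV" using sets_eq_imp_space_eq[OF sG] by simp
  have spN: "space N = UNIV \<times> space MA" using sets_eq_imp_space_eq[OF sN] by (simp add: space_pair_measure)
  have mG: "measurable G = measurable borel" by (rule measurable_cong_sets[OF sG refl, THEN ext])
  have mN: "measurable N = measurable (borel \<Otimes>\<^sub>M MA)" by (rule measurable_cong_sets[OF sN refl, THEN ext])
  have mT: "?T \<in> measurable N (borel \<Otimes>\<^sub>M MA)" unfolding mN by measurable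
  interpret Nt: prob_space ?Nt by (rule N.prob_space_distr[OF mT])
  have sNtG: "sets (?Nt \<Otimes>\<^sub>M G) = sets ((borel \<Otimes>\<^sub>M MA) \<Otimes>\<^sub>M borel)"
    by (rule sets_pair_measure_cong) (auto simp: sG)
  have sNG: "sets (N \<Otimes>\<^sub>M G) = sets ((borel \<Otimes>\<^sub>M MA) \<Otimes>\<^sub>M borel)"
    by (rule sets_pair_measure_cong) (auto simp: sG sN)
  have Seq: "?S = (\<lambda>x. (complex_of_real (fst (fst x)) * snd x, snd (fst x)))" by (auto simp: fun_eq_iff)
  have Req: "?R = (\<lambda>x. (fst (fst x) * snd x, snd (fst x)))" by (auto simp: fun_eq_iff)
  have mS: "?S \<in> measurable (?Nt \<Otimes>\<^sub>M G) ?C"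
    unfolding measurable_cong_sets[OF sNtG refl] Seq by measurable
  have mR: "?R \<in> measurable (N \<Otimes>\<^sub>M G) ?C"
    unfolding measurable_cong_sets[OF sNG refl] Req by measurable
  show ?thesis
  proof (rule measure_eqI)
    show "sets (distr (?Nt \<Otimes>\<^sub>M G) ?C ?S) = sets N" using sN by simp
    fix A assume "A \<in> sets (distr (?Nt \<Otimes>\<^sub>M G) ?C ?S)"
    then have A: "A \<in> sets ?C" by simp
    define SA where "SA = ?S -` A \<inter> space (?Nt \<Otimes>\<^sub>M G)"
    define RA where "RA = ?R -` A \<inter> space (N \<Otimes>\<^sub>M G)"
    have SA: "SA \<in> sets (?Nt \<Otimes>\<^sub>M G)" unfolding SA_def using mS A by (rule measurable_sets)
    have RA: "RA \<in> sets (N \<Otimes>\<^sub>M G)" unfolding RA_def using mR A by (rule measurable_sets)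
    have "emeasure (distr (?Nt \<Otimes>\<^sub>M G) ?C ?S) A = emeasure (?Nt \<Otimes>\<^sub>M G) SA"
      unfolding SA_def by (rule emeasure_distr[OF mS A])
    also have "\<dots> = (\<integral>\<^sup>+y. emeasure G (Pair y -` SA) \<partial>?Nt)"
      by (rule G.emeasure_pair_measure_alt[OF SA])
    also have "\<dots> = (\<integral>\<^sup>+x. emeasure G (Pair (?T x) -` SA) \<partial>N)"
      by (rule nn_integral_distr[OF mT]) (use G.measurable_emeasure_Pair[OF SA] in simp)
    also have "\<dots> = (\<integral>\<^sup>+x. emeasure G (Pair x -` RA) \<partial>N)"
    proof (rule nn_integral_cong)
      fix x assume x: "x \<in> space N"
      obtain a h where xah: "x = (h, a)" by (cases x)
      have a: "a \<in> space MA" using x spN xah by auto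
      have m1: "(\<lambda>z. (complex_of_real (cmod h) * z, a)) \<in> measurable G ?C"
        unfolding mG using a by measurable
      have m2: "(\<lambda>z. (h * z, a)) \<in> measurable G ?C"
        unfolding mG using a by measurable
      have e1: "Pair (?T x) -` SA = (\<lambda>z. (complex_of_real (cmod h) * z, a)) -` A \<inter> space G"
        unfolding SA_def using a by (auto simp: xah space_pair_measure spG)
      have e2: "Pair x -` RA = (\<lambda>z. (h * z, a)) -` A \<inter> space G"
        unfolding RA_def using a by (auto simp: xah space_pair_measure spG spN)
      have "emeasure G (Pair (?T x) -` SA) = emeasure (distr G ?C (\<lambda>z. (complex_of_real (cmod h) * z, a))) A"
        unfolding e1 by (rule emeasure_distr[symmetric, OF m1 A])
      also have "\<dots> = emeasure (distr G ?C (\<lambda>z. (h * z, a))) A"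
        by (simp only: rot_point1[OF sG a rotG])
      also have "\<dots> = emeasure G (Pair x -` RA)"
        unfolding e2 by (rule emeasure_distr[OF m2 A])
      finally show "emeasure G (Pair (?T x) -` SA) = emeasure G (Pair x -` RA)" .
    qed
    also have "\<dots> = emeasure (N \<Otimes>\<^sub>M G) RA"
      by (rule G.emeasure_pair_measure_alt[OF RA, symmetric])
    also have "\<dots> = (\<integral>\<^sup>+z. emeasure N ((\<lambda>x. (x, z)) -` RA) \<partial>G)"
      by (rule NG.emeasure_pair_measure_alt2[OF RA])
    also have "\<dots> = (\<integral>\<^sup>+z. emeasure N A \<partial>G)"
    proof (rule nn_integral_cong_AE)
      show "AE z in G. emeasure N ((\<lambda>x. (x, z)) -` RA) = emeasure N A"
      proof (rule AE_mp[OF aeG], intro AE_I2 impI)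
        fix z :: complex assume z: "cmod z = 1"
        have mz: "(\<lambda>(h,a). (z*h, a)) \<in> measurable N ?C" unfolding mN by measurable
        have e: "(\<lambda>x. (x, z)) -` RA = (\<lambda>(h,a). (z*h, a)) -` A \<inter> space N"
          unfolding RA_def by (auto simp: space_pair_measure spG mult.commute)
        have "emeasure N ((\<lambda>x. (x, z)) -` RA) = emeasure (distr N ?C (\<lambda>(h,a). (z*h, a))) A"
          unfolding e by (rule emeasure_distr[symmetric, OF mz A])
        also have "\<dots> = emeasure N A" by (simp only: rotN[OF z])
        finally show "emeasure N ((\<lambda>x. (x, z)) -` RA) = emeasure N A" .
      qed
    qed
    also have "\<dots> = emeasure N A" by (simp add: G.emeasure_space_1)
    finally show "emeasure (distr (?Nt \<Otimes>\<^sub>M G) ?C ?S) A = emeasure N A" .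
  qed
qed



lemma part_gen2:
  fixes M :: "'a measure" and A :: "'a \<Rightarrow> real" and Z :: "'a \<Rightarrow> complex" and G :: "complex measure"
  assumes PS: "prob_space M" and Am[measurable]: "A \<in> borel_measurable M" and Zm[measurable]: "Z \<in> borel_measurable M"
   and rotP: "\<And>u. cmod u = 1 \<Longrightarrow> distr (distr M (borel \<Otimes>\<^sub>M borel) (\<lambda>\<omega>. (A \<omega>, Z \<omega>))) (borel \<Otimes>\<^sub>M borel) (\<lambda>(a,h). (a, u*h))
             = distr M (borel \<Otimes>\<^sub>M borel) (\<lambda>\<omega>. (A \<omega>, Z \<omega>))"
   and pG: "prob_space G" and sG: "sets G = sets borel"
   and rotG: "\<And>u. cmod u = 1 \<Longrightarrow> distr G borel (\<lambda>z. u*z) = G"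
   and aeG: "AE z in G. cmod z = 1"
  shows "prob_space.mutual_information M b borel borel A Z = prob_space.mutual_information M b borel borel A (\<lambda>\<omega>. cmod (Z \<omega>))"
proof -
  interpret M: prob_space M by fact
  interpret G: prob_space G by fact
  let ?C = "borel \<Otimes>\<^sub>M borel :: (real \<times> complex) measure"
  let ?RR = "borel \<Otimes>\<^sub>M borel :: (real \<times> real) measure"
  let ?DA = "distr M borel A" and ?DZ = "distr M borel Z" and ?DcZ = "distr M borel (\<lambda>\<omega>. cmod (Z \<omega>))"
  let ?P = "distr M ?C (\<lambda>\<omega>. (A \<omega>, Z \<omega>))" and ?Q = "?DA \<Otimes>\<^sub>M ?DZ"
  let ?P' = "distr M ?RR (\<lambda>\<omega>. (A \<omega>, cmod (Z \<omega>)))" and ?Q' = "?DA \<Otimes>\<^sub>M ?DcZ"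
  let ?T = "\<lambda>(a::real,h::complex). (a, cmod h)"
  let ?S = "\<lambda>((a::real,r::real),z::complex). (a, complex_of_real r * z)"
  interpret DA: prob_space ?DA by (rule M.prob_space_distr) simp
  interpret DZ: prob_space ?DZ by (rule M.prob_space_distr) simp
  interpret DcZ: prob_space ?DcZ by (rule M.prob_space_distr) simp
  interpret Q: pair_prob_space ?DA ?DZ ..
  interpret Q': pair_prob_space ?DA ?DcZ ..
  interpret Q'G: pair_sigma_finite ?Q' G ..
  interpret P: prob_space ?P by (rule M.prob_space_distr) simp
  have sQ: "sets ?Q = sets ?C" by simp
  have sQ': "sets ?Q' = sets ?RR" by simp
  have mT: "?T \<in> measurable ?C ?RR" by measurable
  have mTQ: "?T \<in> measurable ?Q ?Q'" using mT by (simp add: measurable_cong_sets[OF sQ sQ'])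
  have sQ'G: "sets (?Q' \<Otimes>\<^sub>M G) = sets (?RR \<Otimes>\<^sub>M borel)"
    by (rule sets_pair_measure_cong) (auto simp: sG)
  have Seq: "?S = (\<lambda>x. (fst (fst x), complex_of_real (snd (fst x)) * snd x))" by (auto simp: fun_eq_iff)
  have mS: "?S \<in> measurable (?Q' \<Otimes>\<^sub>M G) ?Q"
    unfolding measurable_cong_sets[OF sQ'G sQ] Seq by measurable
  have P'eq: "distr ?P ?RR ?T = ?P'"
    using distr_distr[OF mT, of "\<lambda>\<omega>. (A \<omega>, Z \<omega>)" M] by (simp add: comp_def)
  have P'eq2: "distr ?P ?Q' ?T = ?P'"
  proof -
    have "distr ?P ?Q' ?T = distr ?P ?RR ?T" by (rule distr_cong) auto
    then show ?thesis using P'eq by simp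
  qed
  have DAid: "distr ?DA borel (\<lambda>x. x) = ?DA" by (rule distr_id2) simp
  have DZc: "distr ?DZ borel cmod = ?DcZ"
    using distr_distr[of cmod borel borel Z M] by (simp add: comp_def)
  have Q'eq: "distr ?Q ?RR ?T = ?Q'"
  proof -
    have "distr ?DA borel (\<lambda>x. x) \<Otimes>\<^sub>M distr ?DZ borel cmod = distr ?Q ?RR (\<lambda>(x, y). (x, cmod y))"
      by (rule pair_measure_distr) (auto simp: DZc intro: DcZ.sigma_finite_measure_axioms)
    then show ?thesis using DAid DZc by simp
  qed
  have Q'eq2: "distr ?Q ?Q' ?T = ?Q'"
  proof -
    have "distr ?Q ?Q' ?T = distr ?Q ?RR ?T" by (rule distr_cong) auto
    then show ?thesis using Q'eq by simp
  qed
  have rotZ: "distr ?DZ borel (\<lambda>z. u*z) = ?DZ" if u: "cmod u = 1" for u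
  proof -
    have msnd: "snd \<in> measurable ?C (borel :: complex measure)" by measurable
    have mR: "(\<lambda>(a::real,h::complex). (a, u*h)) \<in> measurable ?C ?C" by measurable
    have mZ: "(\<lambda>\<omega>. (A \<omega>, Z \<omega>)) \<in> measurable M ?C" by measurable
    have sP: "sets ?P = sets ?C" by simp
    have msndP: "snd \<in> measurable ?P (borel :: complex measure)" unfolding measurable_cong_sets[OF sP refl] by (rule msnd)
    have mRP: "(\<lambda>(a::real,h::complex). (a, u*h)) \<in> measurable ?P ?C" unfolding measurable_cong_sets[OF sP refl] by (rule mR)
    have mu: "(\<lambda>z. u*z) \<in> measurable (borel :: complex measure) borel" by measurable
    have e1: "distr ?P borel snd = ?DZ"
      using distr_distr[OF msnd mZ] by (simp add: comp_def)
    have "?DZ = distr (distr ?P ?C (\<lambda>(a,h). (a, u*h))) borel snd" by (simp only: rotP[OF u] e1)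
    also have "\<dots> = distr ?P borel (snd \<circ> (\<lambda>(a,h). (a, u*h)))" by (rule distr_distr[OF msnd mRP])
    also have "snd \<circ> (\<lambda>(a::real,h). (a, u*h)) = (\<lambda>z. u * z) \<circ> snd" by (auto simp: fun_eq_iff)
    also have "distr ?P borel ((\<lambda>z. u * z) \<circ> snd) = distr (distr ?P borel snd) borel (\<lambda>z. u * z)"
      by (rule distr_distr[symmetric, OF mu msndP])
    finally have X: "?DZ = distr (distr ?P borel snd) borel (\<lambda>z. u * z)" .
    show ?thesis using X[unfolded e1] by (rule sym)
  qed
  have rotQ: "distr ?Q ?C (\<lambda>(a,h). (a, u*h)) = ?Q" if u: "cmod u = 1" for u
  proof -
    have "distr ?DA borel (\<lambda>x. x) \<Otimes>\<^sub>M distr ?DZ borel (\<lambda>z. u*z) = distr ?Q ?C (\<lambda>(x, y). (x, u*y))"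
      by (rule pair_measure_distr) (auto simp: rotZ[OF u] intro: DZ.sigma_finite_measure_axioms)
    note X = this
    show ?thesis using X[unfolded DAid rotZ[OF u]] by (rule sym)
  qed
  have Prep: "distr (?P' \<Otimes>\<^sub>M G) ?Q ?S = ?P"
  proof -
    have "distr (distr ?P ?RR ?T \<Otimes>\<^sub>M G) ?C ?S = ?P"
      by (rule rot_repr[OF _ P.prob_space_axioms pG sG rotP rotG aeG]) simp
    moreover have "distr (?P' \<Otimes>\<^sub>M G) ?Q ?S = distr (?P' \<Otimes>\<^sub>M G) ?C ?S" by (rule distr_cong) auto
    ultimately show ?thesis using P'eq by simp
  qed
  have Qrep: "distr (?Q' \<Otimes>\<^sub>M G) ?Q ?S = ?Q"
  proof -
    have "distr (distr ?Q ?RR ?T \<Otimes>\<^sub>M G) ?C ?S = ?Q"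
      by (rule rot_repr[OF _ Q.prob_space_axioms pG sG rotQ rotG aeG]) simp
    moreover have "distr (?Q' \<Otimes>\<^sub>M G) ?Q ?S = distr (?Q' \<Otimes>\<^sub>M G) ?C ?S" by (rule distr_cong) auto
    ultimately show ?thesis using Q'eq by simp
  qed
  have TS: "AE x in ?Q' \<Otimes>\<^sub>M G. ?T (?S x) = fst x"
  proof -
    have sp: "space (?Q' \<Otimes>\<^sub>M G) = space (?RR \<Otimes>\<^sub>M borel)" by (rule sets_eq_imp_space_eq[OF sQ'G])
    have meas: "{x \<in> space (?Q' \<Otimes>\<^sub>M G). snd (fst x) \<ge> 0 \<and> cmod (snd x) = 1} \<in> sets (?Q' \<Otimes>\<^sub>M G)"
      unfolding sp sQ'G by measurable
    have ae1: "AE x in ?Q'. snd x \<ge> 0"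
    proof -
      have meas1: "{x \<in> space ?Q'. snd x \<ge> 0} \<in> sets ?Q'" by measurable
      have "AE y in ?DcZ. y \<ge> 0"
        by (subst AE_distr_iff) auto
      then show ?thesis by (intro Q'.AE_pair_measure[OF meas1]) auto
    qed
    have "AE x in ?Q' \<Otimes>\<^sub>M G. snd (fst x) \<ge> 0 \<and> cmod (snd x) = 1"
      by (rule Q'G.AE_pair_measure[OF meas]) (use ae1 aeG in \<open>auto elim!: AE_mp\<close>)
    then show ?thesis by (rule AE_mp) (auto simp: norm_mult)
  qed
  have "prob_space.mutual_information M b borel borel A Z = KL_divergence b ?Q ?P"
    by (simp add: M.mutual_information_def)
  also have "\<dots> = KL_divergence b ?Q' ?P'"
  proof (rule KL_suff[where G=G and T="?T" and S="?S"])
    show "sets ?P = sets ?Q" by simp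
    show "sets ?P' = sets ?Q'" by simp
    show "finite_measure ?Q'" by (rule Q'.finite_measure_axioms)
    show "finite_measure ?Q" by (rule Q.finite_measure_axioms)
    show "prob_space G" by (rule pG)
    show "?T \<in> measurable ?Q ?Q'" by (rule mTQ)
    show "?S \<in> measurable (?Q' \<Otimes>\<^sub>M G) ?Q" by (rule mS)
    show "?P = distr (?P' \<Otimes>\<^sub>M G) ?Q ?S" by (rule Prep[symmetric])
    show "?Q = distr (?Q' \<Otimes>\<^sub>M G) ?Q ?S" by (rule Qrep[symmetric])
    show "?P' = distr ?P ?Q' ?T" by (rule P'eq2[symmetric])
    show "?Q' = distr ?Q ?Q' ?T" by (rule Q'eq2[symmetric])
    show "AE x in ?Q' \<Otimes>\<^sub>M G. ?T (?S x) = fst x" by (rule TS)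
  qed
  also have "\<dots> = prob_space.mutual_information M b borel borel A (\<lambda>\<omega>. cmod (Z \<omega>))"
    by (simp add: M.mutual_information_def)
  finally show ?thesis .
qed

lemma part_gen1:
  fixes M :: "'a measure" and A :: "'a \<Rightarrow> real" and Z :: "'a \<Rightarrow> complex" and G :: "complex measure"
  assumes PS: "prob_space M" and Am[measurable]: "A \<in> borel_measurable M" and Zm[measurable]: "Z \<in> borel_measurable M"
   and rotP: "\<And>u. cmod u = 1 \<Longrightarrow> distr (distr M (borel \<Otimes>\<^sub>M borel) (\<lambda>\<omega>. (Z \<omega>, A \<omega>))) (borel \<Otimes>\<^sub>M borel) (\<lambda>(h,a). (u*h, a))
             = distr M (borel \<Otimes>\<^sub>M borel) (\<lambda>\<omega>. (Z \<omega>, A \<omega>))"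
   and pG: "prob_space G" and sG: "sets G = sets borel"
   and rotG: "\<And>u. cmod u = 1 \<Longrightarrow> distr G borel (\<lambda>z. u*z) = G"
   and aeG: "AE z in G. cmod z = 1"
  shows "prob_space.mutual_information M b borel borel Z A = prob_space.mutual_information M b borel borel (\<lambda>\<omega>. cmod (Z \<omega>)) A"
proof -
  interpret M: prob_space M by fact
  interpret G: prob_space G by fact
  let ?C = "borel \<Otimes>\<^sub>M borel :: (complex \<times> real) measure"
  let ?RR = "borel \<Otimes>\<^sub>M borel :: (real \<times> real) measure"
  let ?DA = "distr M borel A" and ?DZ = "distr M borel Z" and ?DcZ = "distr M borel (\<lambda>\<omega>. cmod (Z \<omega>))"
  let ?P = "distr M ?C (\<lambda>\<omega>. (Z \<omega>, A \<omega>))" and ?Q = "?DZ \<Otimes>\<^sub>M ?DA"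
  let ?P' = "distr M ?RR (\<lambda>\<omega>. (cmod (Z \<omega>), A \<omega>))" and ?Q' = "?DcZ \<Otimes>\<^sub>M ?DA"
  let ?T = "\<lambda>(h::complex,a::real). (cmod h, a)"
  let ?S = "\<lambda>((r::real,a::real),z::complex). (complex_of_real r * z, a)"
  interpret DA: prob_space ?DA by (rule M.prob_space_distr) simp
  interpret DZ: prob_space ?DZ by (rule M.prob_space_distr) simp
  interpret DcZ: prob_space ?DcZ by (rule M.prob_space_distr) simp
  interpret Q: pair_prob_space ?DZ ?DA ..
  interpret Q': pair_prob_space ?DcZ ?DA ..
  interpret Q'G: pair_sigma_finite ?Q' G ..
  interpret P: prob_space ?P by (rule M.prob_space_distr) simp
  have sQ: "sets ?Q = sets ?C" by simp
  have sQ': "sets ?Q' = sets ?RR" by simp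
  have mT: "?T \<in> measurable ?C ?RR" by measurable
  have mTQ: "?T \<in> measurable ?Q ?Q'" using mT by (simp add: measurable_cong_sets[OF sQ sQ'])
  have sQ'G: "sets (?Q' \<Otimes>\<^sub>M G) = sets (?RR \<Otimes>\<^sub>M borel)"
    by (rule sets_pair_measure_cong) (auto simp: sG)
  have Seq: "?S = (\<lambda>x. (complex_of_real (fst (fst x)) * snd x, snd (fst x)))" by (auto simp: fun_eq_iff)
  have mS: "?S \<in> measurable (?Q' \<Otimes>\<^sub>M G) ?Q"
    unfolding measurable_cong_sets[OF sQ'G sQ] Seq by measurable
  have P'eq: "distr ?P ?RR ?T = ?P'"
    using distr_distr[OF mT, of "\<lambda>\<omega>. (Z \<omega>, A \<omega>)" M] by (simp add: comp_def)
  have P'eq2: "distr ?P ?Q' ?T = ?P'"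
  proof -
    have "distr ?P ?Q' ?T = distr ?P ?RR ?T" by (rule distr_cong) auto
    then show ?thesis using P'eq by simp
  qed
  have DAid: "distr ?DA borel (\<lambda>x. x) = ?DA" by (rule distr_id2) simp
  have DZc: "distr ?DZ borel cmod = ?DcZ"
    using distr_distr[of cmod borel borel Z M] by (simp add: comp_def)
  have Q'eq: "distr ?Q ?RR ?T = ?Q'"
  proof -
    have "distr ?DZ borel cmod \<Otimes>\<^sub>M distr ?DA borel (\<lambda>x. x) = distr ?Q ?RR (\<lambda>(x, y). (cmod x, y))"
      by (rule pair_measure_distr) (auto simp: DAid intro: DA.sigma_finite_measure_axioms)
    then show ?thesis using DAid DZc by simp
  qed
  have Q'eq2: "distr ?Q ?Q' ?T = ?Q'"
  proof -
    have "distr ?Q ?Q' ?T = distr ?Q ?RR ?T" by (rule distr_cong) auto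
    then show ?thesis using Q'eq by simp
  qed
  have rotZ: "distr ?DZ borel (\<lambda>z. u*z) = ?DZ" if u: "cmod u = 1" for u
  proof -
    have msnd: "fst \<in> measurable ?C (borel :: complex measure)" by measurable
    have mR: "(\<lambda>(h::complex,a::real). (u*h, a)) \<in> measurable ?C ?C" by measurable
    have mZ: "(\<lambda>\<omega>. (Z \<omega>, A \<omega>)) \<in> measurable M ?C" by measurable
    have sP: "sets ?P = sets ?C" by simp
    have msndP: "fst \<in> measurable ?P (borel :: complex measure)" unfolding measurable_cong_sets[OF sP refl] by (rule msnd)
    have mRP: "(\<lambda>(h::complex,a::real). (u*h, a)) \<in> measurable ?P ?C" unfolding measurable_cong_sets[OF sP refl] by (rule mR)
    have mu: "(\<lambda>z. u*z) \<in> measurable (borel :: complex measure) borel" by measurable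
    have e1: "distr ?P borel fst = ?DZ"
      using distr_distr[OF msnd mZ] by (simp add: comp_def)
    have "?DZ = distr (distr ?P ?C (\<lambda>(h,a). (u*h, a))) borel fst" by (simp only: rotP[OF u] e1)
    also have "\<dots> = distr ?P borel (fst \<circ> (\<lambda>(h,a). (u*h, a)))" by (rule distr_distr[OF msnd mRP])
    also have "fst \<circ> (\<lambda>(h,a::real). (u*h, a)) = (\<lambda>z. u * z) \<circ> fst" by (auto simp: fun_eq_iff)
    also have "distr ?P borel ((\<lambda>z. u * z) \<circ> fst) = distr (distr ?P borel fst) borel (\<lambda>z. u * z)"
      by (rule distr_distr[symmetric, OF mu msndP])
    finally have X: "?DZ = distr (distr ?P borel fst) borel (\<lambda>z. u * z)" .
    show ?thesis using X[unfolded e1] by (rule sym)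
  qed
  have rotQ: "distr ?Q ?C (\<lambda>(h,a). (u*h, a)) = ?Q" if u: "cmod u = 1" for u
  proof -
    have "distr ?DZ borel (\<lambda>z. u*z) \<Otimes>\<^sub>M distr ?DA borel (\<lambda>x. x) = distr ?Q ?C (\<lambda>(x, y). (u*x, y))"
      by (rule pair_measure_distr) (auto simp: DAid intro: DA.sigma_finite_measure_axioms)
    note X = this
    show ?thesis using X[unfolded DAid rotZ[OF u]] by (rule sym)
  qed
  have Prep: "distr (?P' \<Otimes>\<^sub>M G) ?Q ?S = ?P"
  proof -
    have "distr (distr ?P ?RR ?T \<Otimes>\<^sub>M G) ?C ?S = ?P"
      by (rule rot_repr1[OF _ P.prob_space_axioms pG sG rotP rotG aeG]) simp
    moreover have "distr (?P' \<Otimes>\<^sub>M G) ?Q ?S = distr (?P' \<Otimes>\<^sub>M G) ?C ?S" by (rule distr_cong) auto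
    ultimately show ?thesis using P'eq by simp
  qed
  have Qrep: "distr (?Q' \<Otimes>\<^sub>M G) ?Q ?S = ?Q"
  proof -
    have "distr (distr ?Q ?RR ?T \<Otimes>\<^sub>M G) ?C ?S = ?Q"
      by (rule rot_repr1[OF _ Q.prob_space_axioms pG sG rotQ rotG aeG]) simp
    moreover have "distr (?Q' \<Otimes>\<^sub>M G) ?Q ?S = distr (?Q' \<Otimes>\<^sub>M G) ?C ?S" by (rule distr_cong) auto
    ultimately show ?thesis using Q'eq by simp
  qed
  have TS: "AE x in ?Q' \<Otimes>\<^sub>M G. ?T (?S x) = fst x"
  proof -
    have sp: "space (?Q' \<Otimes>\<^sub>M G) = space (?RR \<Otimes>\<^sub>M borel)" by (rule sets_eq_imp_space_eq[OF sQ'G])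
    have meas: "{x \<in> space (?Q' \<Otimes>\<^sub>M G). fst (fst x) \<ge> 0 \<and> cmod (snd x) = 1} \<in> sets (?Q' \<Otimes>\<^sub>M G)"
      unfolding sp sQ'G by measurable
    have ae1: "AE x in ?Q'. fst x \<ge> 0"
    proof -
      have meas1: "{x \<in> space ?Q'. fst x \<ge> 0} \<in> sets ?Q'" by measurable
      have "AE y in ?DcZ. y \<ge> 0"
        by (subst AE_distr_iff) auto
      then show ?thesis by (intro Q'.AE_pair_measure[OF meas1]) auto
    qed
    have "AE x in ?Q' \<Otimes>\<^sub>M G. fst (fst x) \<ge> 0 \<and> cmod (snd x) = 1"
      by (rule Q'G.AE_pair_measure[OF meas]) (use ae1 aeG in \<open>auto elim!: AE_mp\<close>)
    then show ?thesis by (rule AE_mp) (auto simp: norm_mult)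
  qed
  have "prob_space.mutual_information M b borel borel Z A = KL_divergence b ?Q ?P"
    by (simp add: M.mutual_information_def)
  also have "\<dots> = KL_divergence b ?Q' ?P'"
  proof (rule KL_suff[where G=G and T="?T" and S="?S"])
    show "sets ?P = sets ?Q" by simp
    show "sets ?P' = sets ?Q'" by simp
    show "finite_measure ?Q'" by (rule Q'.finite_measure_axioms)
    show "finite_measure ?Q" by (rule Q.finite_measure_axioms)
    show "prob_space G" by (rule pG)
    show "?T \<in> measurable ?Q ?Q'" by (rule mTQ)
    show "?S \<in> measurable (?Q' \<Otimes>\<^sub>M G) ?Q" by (rule mS)
    show "?P = distr (?P' \<Otimes>\<^sub>M G) ?Q ?S" by (rule Prep[symmetric])
    show "?Q = distr (?Q' \<Otimes>\<^sub>M G) ?Q ?S" by (rule Qrep[symmetric])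
    show "?P' = distr ?P ?Q' ?T" by (rule P'eq2[symmetric])
    show "?Q' = distr ?Q ?Q' ?T" by (rule Q'eq2[symmetric])
    show "AE x in ?Q' \<Otimes>\<^sub>M G. ?T (?S x) = fst x" by (rule TS)
  qed
  also have "\<dots> = prob_space.mutual_information M b borel borel (\<lambda>\<omega>. cmod (Z \<omega>)) A"
    by (simp add: M.mutual_information_def)
  finally show ?thesis .
qed



context zsetup begin

definition "Gm = distr M borel (\<lambda>\<omega>. sgn (H \<omega>))"

lemma sgn_meas[measurable]: "(sgn :: complex \<Rightarrow> complex) \<in> borel_measurable borel"
  by (simp add: sgn_div_norm) measurable?

lemma G_prob: "prob_space Gm"
  unfolding Gm_def by (rule prob_space.prob_space_distr[OF PS]) measurable

lemma G_sets: "sets Gm = sets borel" by (simp add: Gm_def)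

lemma G_rot: "cmod u = 1 \<Longrightarrow> distr Gm borel (\<lambda>z. u*z) = Gm"
proof -
  assume u: "cmod u = 1"
  have mu: "(\<lambda>z. u*z) \<in> measurable (borel :: complex measure) borel" by measurable
  have msH: "(\<lambda>\<omega>. sgn (H \<omega>)) \<in> borel_measurable M" by measurable
  have muH: "(\<lambda>\<omega>. u * H \<omega>) \<in> borel_measurable M" by measurable
  have sg: "u * sgn h = sgn (u * h)" for h :: complex
    using u by (simp add: sgn_mult sgn_div_norm norm_mult)
  have "distr Gm borel (\<lambda>z. u*z) = distr M borel ((\<lambda>z. u*z) \<circ> (\<lambda>\<omega>. sgn (H \<omega>)))"
    unfolding Gm_def by (rule distr_distr[OF mu msH])
  also have "(\<lambda>z. u*z) \<circ> (\<lambda>\<omega>. sgn (H \<omega>)) = sgn \<circ> (\<lambda>\<omega>. u * H \<omega>)"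
    by (simp add: fun_eq_iff sg)
  also have "distr M borel (sgn \<circ> (\<lambda>\<omega>. u * H \<omega>)) = distr (distr M borel (\<lambda>\<omega>. u * H \<omega>)) borel sgn"
    by (rule distr_distr[symmetric, OF sgn_meas muH])
  also have "distr M borel (\<lambda>\<omega>. u * H \<omega>) = distr M borel H" by (rule ZMCSCG_rot[OF ZH u])
  also have "distr (distr M borel H) borel sgn = Gm"
    unfolding Gm_def using distr_distr[OF sgn_meas H_meas] by (simp add: comp_def)
  finally show ?thesis .
qed

lemma G_ae: "AE z in Gm. cmod z = 1"
proof -
  have n0: "{0} \<in> null_sets (distr M borel H)" using ZMCSCG_zero[OF ZH] by auto
  have "AE z in distr M borel H. z \<noteq> 0" by (rule AE_I'[OF n0]) auto
  then have "AE \<omega> in M. H \<omega> \<noteq> 0" by (subst (asm) AE_distr_iff) auto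
  then have "AE \<omega> in M. cmod (sgn (H \<omega>)) = 1" by (rule AE_mp) (auto simp: norm_sgn)
  then show ?thesis unfolding Gm_def by (subst AE_distr_iff) auto
qed

lemma rotP2: "cmod u = 1 \<Longrightarrow>
  distr (distr M (borel \<Otimes>\<^sub>M borel) (\<lambda>\<omega>. (cmod (H \<omega> + WA \<omega>), H \<omega> + WB \<omega>))) (borel \<Otimes>\<^sub>M borel) (\<lambda>(a,h). (a, u*h))
  = distr M (borel \<Otimes>\<^sub>M borel) (\<lambda>\<omega>. (cmod (H \<omega> + WA \<omega>), H \<omega> + WB \<omega>))"
proof -
  assume u: "cmod u = 1"
  let ?F = "\<lambda>x::nat \<Rightarrow> complex. (cmod (x 0 + x 1), x 0 + x 2)"
  have F: "?F \<in> measurable (PiM I (\<lambda>_. borel)) (borel \<Otimes>\<^sub>M borel)" unfolding I_def by measurable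
  have R: "(\<lambda>(a::real,h::complex). (a, u*h)) \<in> measurable (borel \<Otimes>\<^sub>M borel) (borel \<Otimes>\<^sub>M borel)" by measurable
  have c: "cmod (u * a + u * b) = cmod (a + b)" for a b
    using u by (simp add: distrib_left[symmetric] norm_mult)
  have comm: "(\<lambda>(a,h). (a, u*h)) (?F x) = ?F (\<lambda>i\<in>I. u * x i)" for x
    by (simp add: I_def c distrib_left)
  have eqF: "(\<lambda>\<omega>. ?F (\<lambda>i\<in>I. X i \<omega>)) = (\<lambda>\<omega>. (cmod (H \<omega> + WA \<omega>), H \<omega> + WB \<omega>))"
    by (simp add: fun_eq_iff X_def I_def)
  show ?thesis using law_rot[OF F R u comm] unfolding eqF .
qed

lemma rotP1: "cmod u = 1 \<Longrightarrow>
  distr (distr M (borel \<Otimes>\<^sub>M borel) (\<lambda>\<omega>. (H \<omega> + WA \<omega>, cmod (H \<omega> + WB \<omega>)))) (borel \<Otimes>\<^sub>M borel) (\<lambda>(h,a). (u*h, a))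
  = distr M (borel \<Otimes>\<^sub>M borel) (\<lambda>\<omega>. (H \<omega> + WA \<omega>, cmod (H \<omega> + WB \<omega>)))"
proof -
  assume u: "cmod u = 1"
  let ?F = "\<lambda>x::nat \<Rightarrow> complex. (x 0 + x 1, cmod (x 0 + x 2))"
  have F: "?F \<in> measurable (PiM I (\<lambda>_. borel)) (borel \<Otimes>\<^sub>M borel)" unfolding I_def by measurable
  have R: "(\<lambda>(h::complex,a::real). (u*h, a)) \<in> measurable (borel \<Otimes>\<^sub>M borel) (borel \<Otimes>\<^sub>M borel)" by measurable
  have c: "cmod (u * a + u * b) = cmod (a + b)" for a b
    using u by (simp add: distrib_left[symmetric] norm_mult)
  have comm: "(\<lambda>(h,a). (u*h, a)) (?F x) = ?F (\<lambda>i\<in>I. u * x i)" for x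
    by (simp add: I_def c distrib_left)
  have eqF: "(\<lambda>\<omega>. ?F (\<lambda>i\<in>I. X i \<omega>)) = (\<lambda>\<omega>. (H \<omega> + WA \<omega>, cmod (H \<omega> + WB \<omega>)))"
    by (simp add: fun_eq_iff X_def I_def)
  show ?thesis using law_rot[OF F R u comm] unfolding eqF .
qed

lemma main:
  "prob_space.mutual_information M b borel borel
           (\<lambda>\<omega>. cmod (H \<omega> + WA \<omega>)) (\<lambda>\<omega>. H \<omega> + WB \<omega>)
         = prob_space.mutual_information M b borel borel
           (\<lambda>\<omega>. cmod (H \<omega> + WA \<omega>)) (\<lambda>\<omega>. cmod (H \<omega> + WB \<omega>))
       \<and> prob_space.mutual_information M b borel borel
           (\<lambda>\<omega>. H \<omega> + WA \<omega>) (\<lambda>\<omega>. cmod (H \<omega> + WB \<omega>))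
         = prob_space.mutual_information M b borel borel
           (\<lambda>\<omega>. cmod (H \<omega> + WA \<omega>)) (\<lambda>\<omega>. cmod (H \<omega> + WB \<omega>))"
proof
  show "prob_space.mutual_information M b borel borel
           (\<lambda>\<omega>. cmod (H \<omega> + WA \<omega>)) (\<lambda>\<omega>. H \<omega> + WB \<omega>)
         = prob_space.mutual_information M b borel borel
           (\<lambda>\<omega>. cmod (H \<omega> + WA \<omega>)) (\<lambda>\<omega>. cmod (H \<omega> + WB \<omega>))"
    by (rule part_gen2[OF PS _ _ rotP2 G_prob G_sets G_rot G_ae]) measurable
  show "prob_space.mutual_information M b borel borel
           (\<lambda>\<omega>. H \<omega> + WA \<omega>) (\<lambda>\<omega>. cmod (H \<omega> + WB \<omega>))
         = prob_space.mutual_information M b borel borel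
           (\<lambda>\<omega>. cmod (H \<omega> + WA \<omega>)) (\<lambda>\<omega>. cmod (H \<omega> + WB \<omega>))"
    by (rule part_gen1[OF PS _ _ rotP1 G_prob G_sets G_rot G_ae]) measurable
qed

end
theorem proposition4:
  fixes M :: "'a measure" and H W\<^sub>A W\<^sub>B :: "'a \<Rightarrow> complex"
    and p \<sigma>\<^sub>A\<^sub>2 \<sigma>\<^sub>B\<^sub>2 :: real
  assumes "prob_space M"
    and "p > 0" and "\<sigma>\<^sub>A\<^sub>2 > 0" and "\<sigma>\<^sub>B\<^sub>2 > 0"
    and "ZMCSCG M p H" and "ZMCSCG M \<sigma>\<^sub>A\<^sub>2 W\<^sub>A" and "ZMCSCG M \<sigma>\<^sub>B\<^sub>2 W\<^sub>B"
    and "prob_space.indep_vars M (\<lambda>_. borel)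
           (\<lambda>i::nat. if i = 0 then H else if i = 1 then W\<^sub>A else W\<^sub>B) {0, 1, 2}"
  shows "prob_space.mutual_information M 2 borel borel
           (\<lambda>\<omega>. cmod (H \<omega> + W\<^sub>A \<omega>)) (\<lambda>\<omega>. H \<omega> + W\<^sub>B \<omega>)
         = prob_space.mutual_information M 2 borel borel
           (\<lambda>\<omega>. cmod (H \<omega> + W\<^sub>A \<omega>)) (\<lambda>\<omega>. cmod (H \<omega> + W\<^sub>B \<omega>))
       \<and> prob_space.mutual_information M 2 borel borel
           (\<lambda>\<omega>. H \<omega> + W\<^sub>A \<omega>) (\<lambda>\<omega>. cmod (H \<omega> + W\<^sub>B \<omega>))
         = prob_space.mutual_information M 2 borel borel
           (\<lambda>\<omega>. cmod (H \<omega> + W\<^sub>A \<omega>)) (\<lambda>\<omega>. cmod (H \<omega> + W\<^sub>B \<omega>))"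
  proof -
  interpret zsetup M H "W\<^sub>A" "W\<^sub>B" p "\<sigma>\<^sub>A\<^sub>2" "\<sigma>\<^sub>B\<^sub>2"
    using assms(1,5,6,7,8) by (rule zsetup.intro)
  show ?thesis by (rule main)
qed

end
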